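(* Let $P=\{p_1,\dots,p_n\}$ be a set of points in the plane with pairwise distinct $x$-coordinates, indexed by increasing $x$-coordinate, and let $l_1,\dots,l_{n-1}$ be vertical lines such that $p_1$ lies to the left of $l_1$, $p_n$ lies to the right of $l_{n-1}$, and for $2\le j\le n-1$ the point $p_j$ is the only point of $P$ in the vertical slab between $l_{j-1}$ and $l_j$. Fix $1\le i\le n-2$ and let $p=p_{i+1}$. Then $p$ has degree $0$, $1$, or $2$ in every T-path $\pi\in\Pi(l_i,P)$ and in every T-path $\pi'\in\Pi(l_{i+1},P)$. Moreover, if $\pi\in\Pi(l_i,P)$ and $\pi'\in\Pi(l_{i+1},P)$ do not cross, then $p$ cannot have degree $0$ in both $\pi$ and $\pi'$, i.e. $p$ is a vertex of at least one of them.
   Context: A triangulation of $P$ is a crossing-free straight-line plane graph on $P$ whose outer face boundary is the boundary of $\mathrm{CH}(P)$ and all of whose bounded faces are empty triangles. A separating line w.r.t. $P$ is a line $l$ with $l\cap P=\emptyset$ and $l\cap\mathrm{CH}(P)\ne\emptyset$. The T-path $\pi_l(T)$ of a triangulation $T$ w.r.t. $l$ is the chain of edges of $T$ such that (1) every edge intersects $l$; (2) the first and last edges are the two edges of $\mathrm{CH}(P)$ intersected by $l$; (3) the region bounded by any two consecutive edges of the chain and $l$ contains no point of $P$ (it exists and is unique). $\Pi(l,P)=\{\pi_l(T): T\text{ a triangulation of }P\}$. The degree of a point in a T-path is its degree in the graph formed by the path's edges (0 if it is not a vertex of the path). Two T-paths cross if some edges of them properly intersect. *)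

theory Defs
  imports "HOL-Analysis.Analysis"
begin

type_synonym pt = "real \<times> real"

text \<open>A line is given as a pair (u, b) with u nonzero, standing for the set of z with u \<bullet> z = b.\<close>
type_synonym line = "pt \<times> real"

definition line_set :: "line \<Rightarrow> pt set" where
  "line_set L = {z. fst L \<bullet> z = snd L}"

definition vline :: "real \<Rightarrow> line" where
  "vline c = ((1, 0), c)"

definition separating_line :: "pt set \<Rightarrow> line \<Rightarrow> bool" where
  "separating_line P L \<longleftrightarrow> fst L \<noteq> 0 \<and> line_set L \<inter> P = {} \<and> line_set L \<inter> convex hull P \<noteq> {}"

text \<open>Triangulation of P, as its set of (empty, nondegenerate) bounded triangular faces:
  triangles with vertices in P, containing no further point of P, with pairwise disjoint
  interiors, whose union is the convex hull of P.\<close>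
definition triangulation :: "pt set \<Rightarrow> pt set set \<Rightarrow> bool" where
  "triangulation P T \<longleftrightarrow>
     (\<forall>t\<in>T. t \<subseteq> P \<and> card t = 3 \<and> \<not> collinear t \<and> convex hull t \<inter> P = t) \<and>
     (\<forall>t\<in>T. \<forall>t'\<in>T. t \<noteq> t' \<longrightarrow> interior (convex hull t) \<inter> interior (convex hull t') = {}) \<and>
     \<Union> ((\<lambda>t. convex hull t) ` T) = convex hull P"

definition tri_edges :: "pt set set \<Rightarrow> pt set set" where
  "tri_edges T = {{a, b} | a b. a \<noteq> b \<and> (\<exists>t\<in>T. a \<in> t \<and> b \<in> t)}"

definition hull_edge :: "pt set \<Rightarrow> pt \<Rightarrow> pt \<Rightarrow> bool" where
  "hull_edge P a b \<longleftrightarrow> a \<in> P \<and> b \<in> P \<and> a \<noteq> b \<and>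
     closed_segment a b \<subseteq> frontier (convex hull P) \<and> closed_segment a b \<inter> P = {a, b}"

text \<open>Segment ab intersects line L (with a, b not on L: strictly opposite sides).\<close>
definition crosses_line :: "line \<Rightarrow> pt \<Rightarrow> pt \<Rightarrow> bool" where
  "crosses_line L a b \<longleftrightarrow> closed_segment a b \<inter> line_set L \<noteq> {}"

definition xpt :: "line \<Rightarrow> pt \<Rightarrow> pt \<Rightarrow> pt" where
  "xpt L a b = a + ((snd L - fst L \<bullet> a) / (fst L \<bullet> (b - a))) *\<^sub>R (b - a)"

definition along :: "line \<Rightarrow> pt \<Rightarrow> real" where
  "along L z = (- snd (fst L), fst (fst L)) \<bullet> z"

text \<open>A T-path of T w.r.t. L, given as the list of vertices v0, v1, ..., vk of the chain.\<close>
definition is_tpath :: "pt set \<Rightarrow> pt set set \<Rightarrow> line \<Rightarrow> pt list \<Rightarrow> bool" where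
  "is_tpath P T L vs \<longleftrightarrow>
     separating_line P L \<and> 2 \<le> length vs \<and>
     (\<forall>j. Suc j < length vs \<longrightarrow>
        {vs ! j, vs ! Suc j} \<in> tri_edges T \<and> crosses_line L (vs ! j) (vs ! Suc j)) \<and>
     hull_edge P (vs ! 0) (vs ! 1) \<and>
     hull_edge P (vs ! (length vs - 2)) (vs ! (length vs - 1)) \<and>
     {vs ! 0, vs ! 1} \<noteq> {vs ! (length vs - 2), vs ! (length vs - 1)} \<and>
     (\<forall>j. 0 < j \<and> Suc j < length vs \<longrightarrow>
        convex hull {vs ! j, xpt L (vs ! (j - 1)) (vs ! j), xpt L (vs ! j) (vs ! Suc j)} \<inter> P
          \<subseteq> {vs ! j}) \<and>
     (let ys = map (\<lambda>j. along L (xpt L (vs ! j) (vs ! Suc j))) [0..<length vs - 1]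
      in sorted_wrt (<) ys \<or> sorted_wrt (>) ys)"

definition path_edges :: "pt list \<Rightarrow> pt set set" where
  "path_edges vs = {{vs ! j, vs ! Suc j} | j. Suc j < length vs}"

definition tdeg :: "pt \<Rightarrow> pt list \<Rightarrow> nat" where
  "tdeg q vs = card {e \<in> path_edges vs. q \<in> e}"

definition proper_cross :: "pt set \<Rightarrow> pt set \<Rightarrow> bool" where
  "proper_cross e e' \<longleftrightarrow> (\<exists>a b c d. e = {a, b} \<and> e' = {c, d} \<and>
      open_segment a b \<inter> open_segment c d \<noteq> {} \<and> \<not> collinear {a, b, c, d})"

definition tpaths_cross :: "pt list \<Rightarrow> pt list \<Rightarrow> bool" where
  "tpaths_cross vs ws \<longleftrightarrow> (\<exists>e\<in>path_edges vs. \<exists>e'\<in>path_edges ws. proper_cross e e')"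

end

theory Submission
  imports Defs
begin


definition sl :: "pt \<Rightarrow> pt \<Rightarrow> real" where
  "sl a b = (snd b - snd a) / (fst b - fst a)"

definition ht :: "pt \<Rightarrow> pt \<Rightarrow> real \<Rightarrow> real" where
  "ht a b x = snd a + (x - fst a) * sl a b"

lemma ht_sym: "fst a \<noteq> fst b \<Longrightarrow> ht a b x = ht b a x"
  unfolding ht_def sl_def by (simp add: field_simps)

lemma ht_fst [simp]: "ht a b (fst a) = snd a"
  by (simp add: ht_def)

lemma ht_snd: "fst a \<noteq> fst b \<Longrightarrow> ht a b (fst b) = snd b"
  by (simp add: ht_def sl_def)

lemma line_set_vline: "line_set (vline c) = {z. fst z = c}"
  by (auto simp: line_set_def vline_def inner_Pair_0 cong: prod.case_eq_if)

lemma along_vline: "along (vline c) z = snd z"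
  by (cases z) (simp add: along_def vline_def)

lemma xpt_vline: "fst a \<noteq> fst b \<Longrightarrow> xpt (vline c) a b = (c, ht a b c)"
  by (cases a, cases b) (simp add: xpt_def vline_def ht_def sl_def field_simps)




lemma seg_memI:
  fixes q a b :: pt
  assumes "0 \<le> u" "u \<le> 1" "fst q = (1-u)* fst a + u* fst b" "snd q = (1-u)* snd a + u* snd b"
  shows "q \<in> closed_segment a b"
  unfolding in_segment
  using assms by (intro exI[of _ u]) (auto simp: prod_eq_iff)

lemma open_seg_pt:
  fixes a b :: pt
  assumes "min (fst a) (fst b) < x" "x < max (fst a) (fst b)"
  shows "(x, ht a b x) \<in> open_segment a b"
proof -
  have ne: "fst a \<noteq> fst b" using assms by auto
  define u where "u = (x - fst a) / (fst b - fst a)"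
  have u01: "0 < u" "u < 1" using assms ne unfolding u_def
    by (auto simp: min_def max_def divide_simps split: if_splits)
  have ne': "fst b - fst a \<noteq> 0" using ne by simp
  have e1: "u * (fst b - fst a) = x - fst a" using ne' by (simp add: u_def)
  have e2: "ht a b x = snd a + u * (snd b - snd a)" by (simp add: ht_def sl_def u_def)
  have "(x, ht a b x) \<in> closed_segment a b"
    apply (rule seg_memI[of u])
    using u01 e1 e2 by (auto simp: algebra_simps)
  moreover have "(x, ht a b x) \<noteq> a" "(x, ht a b x) \<noteq> b" using assms
    by (cases a, cases b, auto simp: min_def max_def split: if_splits)+
  ultimately show ?thesis by (simp add: open_segment_def)
qed

lemma closed_seg_pt:
  fixes a b z :: pt
  assumes "z \<in> closed_segment a b" "fst a \<noteq> fst b"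
  shows "snd z = ht a b (fst z)" "min (fst a) (fst b) \<le> fst z" "fst z \<le> max (fst a) (fst b)"
proof -
  obtain u where u: "0 \<le> u" "u \<le> 1" "z = (1 - u) *\<^sub>R a + u *\<^sub>R b" using assms(1) unfolding in_segment by auto
  have fz: "fst z = (1-u)* fst a + u* fst b" and sz: "snd z = (1-u)* snd a + u* snd b" using u(3) by auto
  have ne': "fst b - fst a \<noteq> 0" using assms(2) by simp
  show "snd z = ht a b (fst z)" using ne' unfolding fz sz ht_def sl_def by (simp add: field_simps)
  have "(1-u)* fst a + u* fst b \<ge> (1-u)*min (fst a) (fst b) + u * min (fst a) (fst b)"
    by (intro add_mono mult_left_mono) (use u in auto)
  then show "min (fst a) (fst b) \<le> fst z" unfolding fz by (simp add: algebra_simps)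
  have "(1-u)* fst a + u* fst b \<le> (1-u)*max (fst a) (fst b) + u * max (fst a) (fst b)"
    by (intro add_mono mult_left_mono) (use u in auto)
  then show "fst z \<le> max (fst a) (fst b)" unfolding fz by (simp add: algebra_simps)
qed

lemma crosses_vline:
  assumes "crosses_line (vline c) a b" "fst a \<noteq> c" "fst b \<noteq> c"
  shows "(fst a < c) \<noteq> (fst b < c)"
proof -
  obtain z where z: "z \<in> closed_segment a b" "fst z = c"
    using assms(1) by (auto simp: crosses_line_def line_set_vline)
  show ?thesis
  proof (cases "fst a = fst b")
    case True
    obtain u where u: "0 \<le> u" "u \<le> 1" "z = (1 - u) *\<^sub>R a + u *\<^sub>R b" using z(1) unfolding in_segment by auto
    have "fst z = (1-u)* fst a + u* fst b" using u(3) by auto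
    also have "\<dots> = fst a" using True by (simp add: algebra_simps)
    finally show ?thesis using z assms by simp
  next
    case False
    from closed_seg_pt(2,3)[OF z(1) False] z(2) assms(2,3) show ?thesis
      by (auto simp: min_def max_def split: if_splits)
  qed
qed

lemma tri_pt:
  fixes v q :: pt
  assumes "fst v \<noteq> c"
    and "min (fst v) c \<le> fst q" "fst q \<le> max (fst v) c"
    and "min (ht v a (fst q)) (ht v b (fst q)) \<le> snd q" "snd q \<le> max (ht v a (fst q)) (ht v b (fst q))"
  shows "q \<in> convex hull {v, (c, ht v a c), (c, ht v b c)}"
proof -
  let ?H = "convex hull {v, (c, ht v a c), (c, ht v b c)}"
  define lam where "lam = (fst q - fst v) / (c - fst v)"
  have l01: "0 \<le> lam" "lam \<le> 1" using assms(1,2,3) unfolding lam_def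
    by (auto simp: min_def max_def divide_simps split: if_splits)
  have ne': "c - fst v \<noteq> 0" using assms(1) by simp
  have fq: "fst q = fst v + lam * (c - fst v)" using ne' by (simp add: lam_def)
  have pa: "(fst q, ht v a (fst q)) \<in> closed_segment v (c, ht v a c)"
    apply (rule seg_memI[of lam]) using l01 by (simp_all add: fq ht_def algebra_simps)
  have pb: "(fst q, ht v b (fst q)) \<in> closed_segment v (c, ht v b c)"
    apply (rule seg_memI[of lam]) using l01 by (simp_all add: fq ht_def algebra_simps)
  have cv: "convex ?H" by (rule convex_convex_hull)
  have "v \<in> ?H" "(c, ht v a c) \<in> ?H" "(c, ht v b c) \<in> ?H" by (auto intro: hull_inc)
  then have A: "(fst q, ht v a (fst q)) \<in> ?H" and B: "(fst q, ht v b (fst q)) \<in> ?H"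
    using closed_segment_subset[OF _ _ cv] pa pb by blast+
  have "q \<in> closed_segment (fst q, ht v a (fst q)) (fst q, ht v b (fst q))"
  proof (cases "ht v a (fst q) = ht v b (fst q)")
    case True
    then show ?thesis using assms(4,5) by (auto simp: prod_eq_iff)
  next
    case False
    define mu where "mu = (snd q - ht v a (fst q)) / (ht v b (fst q) - ht v a (fst q))"
    have F': "ht v b (fst q) - ht v a (fst q) \<noteq> 0" using False by simp
    have "0 \<le> mu" "mu \<le> 1" using False assms(4,5) unfolding mu_def
      by (auto simp: min_def max_def divide_simps split: if_splits)
    moreover have sq: "snd q = ht v a (fst q) + mu * (ht v b (fst q) - ht v a (fst q))"
      using F' by (simp add: mu_def)
    ultimately show ?thesis
      apply (intro seg_memI[of mu]) using F' by (simp_all add: sq algebra_simps)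
  qed
  then show ?thesis using closed_segment_subset[OF A B cv] by blast
qed




definition xinj :: "pt set \<Rightarrow> bool" where
  "xinj P \<longleftrightarrow> (\<forall>q\<in>P. \<forall>q'\<in>P. fst q = fst q' \<longrightarrow> q = q')"

definition emp :: "pt set \<Rightarrow> pt \<Rightarrow> pt \<Rightarrow> bool" where
  "emp P a b \<longleftrightarrow> closed_segment a b \<inter> P \<subseteq> {a, b}"

lemma open_seg_pt':
  fixes a b z :: pt
  assumes "z \<in> open_segment a b" "fst a \<noteq> fst b"
  shows "min (fst a) (fst b) < fst z" "fst z < max (fst a) (fst b)" "snd z = ht a b (fst z)"
proof -
  have z: "z \<in> closed_segment a b" "z \<noteq> a" "z \<noteq> b" using assms(1) by (auto simp: open_segment_def)
  note c = closed_seg_pt[OF z(1) assms(2)]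
  have "fst z \<noteq> fst a"
  proof
    assume "fst z = fst a" then have "snd z = snd a" using c(1) by simp
    then show False using z \<open>fst z = fst a\<close> by (simp add: prod_eq_iff)
  qed
  moreover have "fst z \<noteq> fst b"
  proof
    assume "fst z = fst b" then have "snd z = snd b" using c(1) ht_snd[OF assms(2)] by simp
    then show False using z \<open>fst z = fst b\<close> by (simp add: prod_eq_iff)
  qed
  ultimately show "min (fst a) (fst b) < fst z" "fst z < max (fst a) (fst b)" "snd z = ht a b (fst z)"
    using c by (auto simp: min_def max_def split: if_splits)
qed

lemma on_aff_line:
  assumes "fst c \<noteq> fst d" "snd c = al + ga * fst c" "snd d = al + ga * fst d"
  shows "ht c d x = al + ga * x"
proof -
  have ne: "fst d - fst c \<noteq> 0" using assms(1) by simp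
  have "sl c d = ga" unfolding sl_def using ne assms(2,3) by (simp add: field_simps)
  then show ?thesis unfolding ht_def using assms(2) by (simp add: algebra_simps)
qed

lemma lines_eq:
  assumes "fst a \<noteq> fst b" "fst c \<noteq> fst d" "x1 \<noteq> x2"
    "ht a b x1 = ht c d x1" "ht a b x2 = ht c d x2"
  shows "ht a b x = ht c d x"
proof -
  have "(x1 - x2) * sl a b = (x1 - x2) * sl c d"
    using assms(4,5) unfolding ht_def by (simp add: algebra_simps)
  then have k: "sl a b = sl c d" using assms(3) by simp
  then show ?thesis using assms(4) unfolding ht_def by (simp add: algebra_simps)
qed

lemma same_line_eq:
  assumes P: "a \<in> P" "b \<in> P" "c \<in> P" "d \<in> P" and xi: "xinj P"
    and e: "emp P a b" "emp P c d" and ne: "fst a \<noteq> fst b" "fst c \<noteq> fst d"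
    and L: "\<And>x. ht a b x = ht c d x"
    and x0: "min (fst a) (fst b) < x0" "x0 < max (fst a) (fst b)"
            "min (fst c) (fst d) < x0" "x0 < max (fst c) (fst d)"
  shows "{a, b} = {c, d}"
proof -
  have out1: "\<not> (min (fst a) (fst b) < fst q \<and> fst q < max (fst a) (fst b))"
    if "q \<in> P" "snd q = ht a b (fst q)" for q
  proof
    assume h: "min (fst a) (fst b) < fst q \<and> fst q < max (fst a) (fst b)"
    have "(fst q, ht a b (fst q)) \<in> open_segment a b" using open_seg_pt h by auto
    moreover have "(fst q, ht a b (fst q)) = q" using that(2) by (simp add: prod_eq_iff)
    ultimately have "q \<in> closed_segment a b" by (simp add: open_segment_def)
    then have "q = a \<or> q = b" using e(1) that(1) unfolding emp_def by auto
    then show False using h by auto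
  qed
  have out2: "\<not> (min (fst c) (fst d) < fst q \<and> fst q < max (fst c) (fst d))"
    if "q \<in> P" "snd q = ht c d (fst q)" for q
  proof
    assume h: "min (fst c) (fst d) < fst q \<and> fst q < max (fst c) (fst d)"
    have "(fst q, ht c d (fst q)) \<in> open_segment c d" using open_seg_pt h by auto
    moreover have "(fst q, ht c d (fst q)) = q" using that(2) by (simp add: prod_eq_iff)
    ultimately have "q \<in> closed_segment c d" by (simp add: open_segment_def)
    then have "q = c \<or> q = d" using e(2) that(1) unfolding emp_def by auto
    then show False using h by auto
  qed
  have oc: "\<not> (min (fst a) (fst b) < fst c \<and> fst c < max (fst a) (fst b))"
    using out1[OF P(3)] L[of "fst c"] by simp
  have od: "\<not> (min (fst a) (fst b) < fst d \<and> fst d < max (fst a) (fst b))"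
    using out1[OF P(4)] L[of "fst d"] ht_snd[OF ne(2)] by simp
  have oa: "\<not> (min (fst c) (fst d) < fst a \<and> fst a < max (fst c) (fst d))"
    using out2[OF P(1)] L[of "fst a"] by simp
  have ob: "\<not> (min (fst c) (fst d) < fst b \<and> fst b < max (fst c) (fst d))"
    using out2[OF P(2)] L[of "fst b"] ht_snd[OF ne(1)] by simp
  have X: "(fst c = fst a \<or> fst c = fst b) \<and> (fst d = fst a \<or> fst d = fst b)"
    using oa ob oc od x0 ne by (auto simp: min_def max_def split: if_splits)
  have "c = a \<or> c = b" "d = a \<or> d = b" using X xi P unfolding xinj_def by metis+
  then show ?thesis using ne by auto
qed

lemma collinear_on_line:
  assumes "collinear {c, d, a}" "fst c \<noteq> fst d"
  shows "snd a = ht c d (fst a)"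
proof -
  have "collinear {c, a, d}" using assms(1) by (simp add: insert_commute)
  then obtain u where u: "a = u *\<^sub>R c + (1 - u) *\<^sub>R d" using assms(2) unfolding collinear_3_expand by auto
  have fa: "fst a = u * fst c + (1-u) * fst d" and sa: "snd a = u * snd c + (1-u) * snd d" using u by auto
  have ne: "fst d - fst c \<noteq> 0" using assms(2) by simp
  have f1: "fst a - fst c = (1-u)*(fst d - fst c)" by (simp add: fa algebra_simps)
  have f2: "(fst d - fst c) * sl c d = snd d - snd c" using ne by (simp add: sl_def)
  have "(fst a - fst c) * sl c d = (1 - u) * (snd d - snd c)"
    unfolding f1 f2[symmetric] by simp
  then show ?thesis unfolding ht_def sa by (simp add: algebra_simps)
qed

lemma proper_cross_intro:
  assumes P: "a \<in> P" "b \<in> P" "c \<in> P" "d \<in> P" and xi: "xinj P"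
    and e: "emp P a b" "emp P c d" and ne: "fst a \<noteq> fst b" "fst c \<noteq> fst d"
    and z: "z \<in> open_segment a b" "z \<in> open_segment c d"
    and dif: "{a, b} \<noteq> {c, d}"
  shows "proper_cross {a, b} {c, d}"
proof -
  have "\<not> collinear {a, b, c, d}"
  proof
    assume col: "collinear {a, b, c, d}"
    have "snd a = ht c d (fst a)"
      by (rule collinear_on_line[OF collinear_subset[OF col] ne(2)]) auto
    moreover have "snd b = ht c d (fst b)"
      by (rule collinear_on_line[OF collinear_subset[OF col] ne(2)]) auto
    ultimately have L: "ht a b x = ht c d x" for x
      using lines_eq[OF ne(1) ne(2) ne(1), of x] ht_snd[OF ne(1)] by simp
    note z1 = open_seg_pt'[OF z(1) ne(1)] and z2 = open_seg_pt'[OF z(2) ne(2)]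
    show False using same_line_eq[OF P xi e ne L z1(1,2) z2(1,2)] dif by simp
  qed
  then show ?thesis unfolding proper_cross_def using z by blast
qed

lemma aff_zero:
  fixes f :: "real \<Rightarrow> real"
  assumes f: "\<And>x. f x = A + B * x" and s: "f s < 0" and t: "0 < f t"
  shows "\<exists>x. min s t < x \<and> x < max s t \<and> f x = 0"
proof -
  have B: "B \<noteq> 0" using s t f[of s] f[of t] by auto
  define x where "x = - A / B"
  have fx: "f x = 0" using B by (simp add: f x_def)
  have "min s t < x \<and> x < max s t"
  proof (cases "B > 0")
    case True
    then have "s < x" "x < t" using s t f[of s] f[of t] unfolding x_def
      by (simp_all add: field_simps)
    then show ?thesis by auto
  next
    case False
    then have Bn: "B < 0" using B by simp
    then have "x < s" "t < x" using s t f[of s] f[of t] unfolding x_def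
      by (simp_all add: field_simps)
    then show ?thesis by auto
  qed
  then show ?thesis using fx by blast
qed

lemma aff_nonneg:
  fixes f :: "real \<Rightarrow> real"
  assumes f: "\<And>x. f x = A + B * x" and s: "0 \<le> f s" and t: "0 \<le> f t"
    and x: "min s t \<le> x" "x \<le> max s t"
  shows "0 \<le> f x"
proof (cases "B \<ge> 0")
  case True
  have "B * min s t \<le> B * x" using True x by (simp add: mult_left_mono)
  moreover have "0 \<le> A + B * min s t" using s t f by (auto simp: min_def)
  ultimately show ?thesis using f by simp
next
  case False
  have "B * max s t \<le> B * x" using False x by (simp add: mult_left_mono_neg)
  moreover have "0 \<le> A + B * max s t" using s t f by (auto simp: max_def)
  ultimately show ?thesis using f by simp
qed

lemma ht_aff: "\<exists>A B. \<forall>x. ht a b x - ht c d x = A + B * x"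
  by (rule exI[of _ "snd a - fst a * sl a b - snd c + fst c * sl c d"], rule exI[of _ "sl a b - sl c d"])
     (simp add: ht_def algebra_simps)




lemma tri_edge_elim:
  assumes "{a, b} \<in> tri_edges T"
  obtains t where "t \<in> T" "a \<in> t" "b \<in> t" "a \<noteq> b"
  using assms unfolding tri_edges_def by (auto simp: doubleton_eq_iff)

lemma tri3:
  assumes "triangulation P T" "t \<in> T"
  obtains x y w where "t = {x, y, w}" "x \<noteq> y" "y \<noteq> w" "x \<noteq> w" "\<not> collinear t" "t \<subseteq> P"
    "convex hull t \<inter> P = t"
  using assms unfolding triangulation_def card_3_iff by metis

lemma tri_interior:
  assumes "triangulation P T" "t \<in> T"
  shows "interior (convex hull t) \<noteq> {}"
proof -
  obtain x y w where t: "t = {x, y, w}" "x \<noteq> y" "y \<noteq> w" "x \<noteq> w" "\<not> collinear t"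
    using tri3[OF assms] by metis
  have "card t = Suc (DIM(pt))" using t by auto
  moreover have "\<not> affine_dependent t" using t collinear_3_eq_affine_dependent by metis
  ultimately show ?thesis using interior_convex_hull_eq_empty by blast
qed

lemma tri_edge_props:
  assumes T: "triangulation P T" and e: "{a, b} \<in> tri_edges T"
  shows "a \<in> P" "b \<in> P" "a \<noteq> b" "emp P a b"
proof -
  obtain t where t: "t \<in> T" "a \<in> t" "b \<in> t" "a \<noteq> b" using tri_edge_elim[OF e] by metis
  obtain x y w where tt: "t = {x, y, w}" "x \<noteq> y" "y \<noteq> w" "x \<noteq> w" "\<not> collinear t" "t \<subseteq> P"
    "convex hull t \<inter> P = t" using tri3[OF T t(1)] by metis
  show "a \<in> P" "b \<in> P" "a \<noteq> b" using t tt by auto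
  show "emp P a b" unfolding emp_def
  proof
    fix q assume q: "q \<in> closed_segment a b \<inter> P"
    have "closed_segment a b \<subseteq> convex hull t"
      unfolding segment_convex_hull by (rule hull_mono) (use t in auto)
    then have qt: "q \<in> t" using q tt(7) by auto
    show "q \<in> {a, b}"
    proof (rule ccontr)
      assume nq: "q \<notin> {a, b}"
      have "{a, b, q} \<subseteq> t" using t qt by auto
      moreover have "card {a, b, q} = 3" using nq t by auto
      moreover have "card t = 3" using tt by auto
      ultimately have "t = {a, b, q}" by (metis card_subset_eq finite.emptyI finite.insertI tt(1))
      moreover have "collinear {a, b, q}"
        by (rule collinear_subset[OF collinear_closed_segment[of a b]]) (use q in auto)
      ultimately show False using tt(5) by simp
    qed
  qed
qed

lemma hull_side:
  fixes S :: "pt set"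
  assumes "convex S" "interior S \<noteq> {}" "S \<inter> S' = {} \<or> True"
  shows True by simp

lemma tri_no_cross:
  assumes T: "triangulation P T" and xi: "xinj P"
    and e1: "{a, b} \<in> tri_edges T" and e2: "{c, d} \<in> tri_edges T"
    and dif: "{a, b} \<noteq> {c, d}"
    and z: "z \<in> open_segment a b" "z \<in> open_segment c d"
  shows False
proof -
  note p1 = tri_edge_props[OF T e1] and p2 = tri_edge_props[OF T e2]
  have ne: "fst a \<noteq> fst b" "fst c \<noteq> fst d" using p1 p2 xi unfolding xinj_def by blast+
  note z1 = open_seg_pt'[OF z(1) ne(1)] and z2 = open_seg_pt'[OF z(2) ne(2)]
  have notL: "\<not> (\<forall>x. ht a b x = ht c d x)"
    using same_line_eq[OF p1(1,2) p2(1,2) xi p1(4) p2(4) ne _ z1(1,2) z2(1,2)] dif by blast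
  obtain t1 where t1: "t1 \<in> T" "a \<in> t1" "b \<in> t1" using tri_edge_elim[OF e1] by metis
  obtain t2 where t2: "t2 \<in> T" "c \<in> t2" "d \<in> t2" using tri_edge_elim[OF e2] by metis
  show False
  proof (cases "t1 = t2")
    case True
    obtain x y w where tt: "t1 = {x, y, w}" "x \<noteq> y" "y \<noteq> w" "x \<noteq> w"
      using tri3[OF T t1(1)] by metis
    have "\<exists>e. e \<in> {a, b} \<and> e \<in> {c, d}"
    proof (rule ccontr)
      assume "\<not> ?thesis"
      then have "a \<noteq> c" "a \<noteq> d" "b \<noteq> c" "b \<noteq> d" by blast+
      then have "card {a, b, c, d} = 4" using p1(3) p2(3) by auto
      moreover have "{a, b, c, d} \<subseteq> t1" using t1 t2 True by auto
      ultimately have "4 \<le> card t1" by (metis card_mono finite.emptyI finite.insertI tt(1))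
      then show False using tt by (simp add: card_insert_if)
    qed
    then obtain e where ee: "e \<in> {a, b}" "e \<in> {c, d}" by blast
    have h1: "ht a b (fst e) = snd e" using ee(1) ht_snd[OF ne(1)] by auto
    have h2: "ht c d (fst e) = snd e" using ee(2) ht_snd[OF ne(2)] by auto
    have "fst e \<noteq> fst z" using ee(1) z1 by auto
    then have "ht a b x = ht c d x" for x
      using lines_eq[OF ne, of "fst e" "fst z" x] h1 h2 z1(3) z2(3) by simp
    then show False using notL by blast
  next
    case False
    let ?S1 = "interior (convex hull t1)" and ?S2 = "interior (convex hull t2)"
    have dis: "?S1 \<inter> ?S2 = {}" using T t1(1) t2(1) False unfolding triangulation_def by blast
    obtain h be where h: "h \<noteq> 0" "\<forall>x\<in>?S1. inner h x \<le> be" "\<forall>x\<in>?S2. inner h x \<ge> be"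
      using separating_hyperplane_sets[OF convex_interior[OF convex_convex_hull]
          convex_interior[OF convex_convex_hull] tri_interior[OF T t1(1)] tri_interior[OF T t2(1)] dis]
      by blast
    have fin1: "finite t1" "finite t2" using T t1(1) t2(1) unfolding triangulation_def
      by (metis card.infinite zero_neq_numeral)+
    have cl1: "closure ?S1 = convex hull t1"
      using convex_closure_interior[OF convex_convex_hull tri_interior[OF T t1(1)]] fin1
      by (simp add: finite_imp_compact)
    have cl2: "closure ?S2 = convex hull t2"
      using convex_closure_interior[OF convex_convex_hull tri_interior[OF T t2(1)]] fin1
      by (simp add: finite_imp_compact)
    have H1: "\<forall>x\<in>convex hull t1. inner h x \<le> be"
    proof -
      have "closure ?S1 \<subseteq> {x. inner h x \<le> be}"
        by (rule closure_minimal) (use h closed_halfspace_le in auto)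
      then show ?thesis using cl1 by auto
    qed
    have H2: "\<forall>x\<in>convex hull t2. inner h x \<ge> be"
    proof -
      have "closure ?S2 \<subseteq> {x. inner h x \<ge> be}"
        by (rule closure_minimal) (use h closed_halfspace_ge in auto)
      then show ?thesis using cl2 by auto
    qed
    have sub1: "closed_segment a b \<subseteq> convex hull t1"
      unfolding segment_convex_hull by (rule hull_mono) (use t1 in auto)
    have sub2: "closed_segment c d \<subseteq> convex hull t2"
      unfolding segment_convex_hull by (rule hull_mono) (use t2 in auto)
    have ha: "inner h a \<le> be" "inner h b \<le> be" using H1 t1 by (auto intro: hull_inc)
    have hc: "inner h c \<ge> be" "inner h d \<ge> be" using H2 t2 by (auto intro: hull_inc)
    have zin: "z \<in> closed_segment a b" "z \<in> closed_segment c d" using z by (auto simp: open_segment_def)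
    have hz: "inner h z = be" using H1 H2 sub1 sub2 zin by force
    obtain u where u: "0 < u" "u < 1" "z = (1 - u) *\<^sub>R a + u *\<^sub>R b" using z(1) unfolding in_segment by auto
    obtain v where v: "0 < v" "v < 1" "z = (1 - v) *\<^sub>R c + v *\<^sub>R d" using z(2) unfolding in_segment by auto
    have "inner h z = (1 - u) * inner h a + u * inner h b" using u(3) by (simp add: inner_add_right)
    then have "(1 - u) * (be - inner h a) + u * (be - inner h b) = 0" using hz by (simp add: algebra_simps)
    moreover have "0 \<le> (1 - u) * (be - inner h a)" "0 \<le> u * (be - inner h b)" using ha u(1,2) by simp_all
    ultimately have "(1 - u) * (be - inner h a) = 0" "u * (be - inner h b) = 0" by linarith+
    then have hab: "inner h a = be" "inner h b = be" using u(1,2) by simp_all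
    have "inner h z = (1 - v) * inner h c + v * inner h d" using v(3) by (simp add: inner_add_right)
    then have "(1 - v) * (inner h c - be) + v * (inner h d - be) = 0" using hz by (simp add: algebra_simps)
    moreover have "0 \<le> (1 - v) * (inner h c - be)" "0 \<le> v * (inner h d - be)" using hc v(1,2) by simp_all
    ultimately have "(1 - v) * (inner h c - be) = 0" "v * (inner h d - be) = 0" by linarith+
    then have hcd: "inner h c = be" "inner h d = be" using v(1,2) by simp_all
    have ip: "inner h q = fst h * fst q + snd h * snd q" for q by (simp add: inner_prod_def)
    have h2: "snd h \<noteq> 0"
    proof
      assume s0: "snd h = 0"
      then have "fst h \<noteq> 0" using h(1) by (simp add: prod_eq_iff)
      moreover have "fst h * fst a = fst h * fst b" using hab ip[of a] ip[of b] s0 by simp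
      ultimately show False using ne(1) by simp
    qed
    have on: "snd q = be / snd h + (- fst h / snd h) * fst q" if "inner h q = be" for q
      using that ip[of q] h2 by (simp add: field_simps)
    have "ht a b x = be / snd h + (- fst h / snd h) * x" for x
      using on_aff_line[OF ne(1) on on] hab by simp
    moreover have "ht c d x = be / snd h + (- fst h / snd h) * x" for x
      using on_aff_line[OF ne(2) on on] hcd by simp
    ultimately show False using notL by simp
  qed
qed

lemma hull_edge_side:
  assumes fin: "finite P" and int: "interior (convex hull P) \<noteq> {}"
    and he: "hull_edge P s t" and ne: "fst s \<noteq> fst t"
  shows "\<exists>\<sigma>. \<sigma> \<noteq> 0 \<and> (\<forall>q\<in>P. 0 \<le> \<sigma> * (snd q - ht s t (fst q)))"
proof -
  let ?S = "convex hull P"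
  define z where "z = (1/2) *\<^sub>R s + (1/2) *\<^sub>R t"
  have "z \<in> closed_segment s t" unfolding in_segment z_def by (rule exI[of _ "1/2"]) (simp add: algebra_simps)
  then have zf: "z \<in> frontier ?S" using he unfolding hull_edge_def by auto
  have clS: "closure ?S = ?S" using fin by (simp add: finite_imp_compact)
  have "z \<in> closure ?S" "z \<notin> rel_interior ?S"
    using zf rel_interior_nonempty_interior[OF int] unfolding frontier_def by auto
  then obtain h where h: "h \<noteq> 0" "\<And>y. y \<in> closure ?S \<Longrightarrow> inner h z \<le> inner h y"
    using supporting_hyperplane_relative_frontier[OF convex_convex_hull] by blast
  have sP: "s \<in> P" "t \<in> P" using he unfolding hull_edge_def by auto
  have "s \<in> closure ?S" "t \<in> closure ?S" using sP clS by (auto intro: hull_inc)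
  then have hs: "inner h z \<le> inner h s" "inner h z \<le> inner h t" using h(2) by blast+
  have "inner h z = (1/2) * inner h s + (1/2) * inner h t" by (simp add: z_def inner_add_right)
  then have eq: "inner h s = inner h z" "inner h t = inner h z" using hs by linarith+
  have ip: "inner h q = fst h * fst q + snd h * snd q" for q by (simp add: inner_prod_def)
  have h2: "snd h \<noteq> 0"
  proof
    assume s0: "snd h = 0"
    then have "fst h \<noteq> 0" using h(1) by (simp add: prod_eq_iff)
    moreover have "fst h * fst s = fst h * fst t" using eq ip[of s] ip[of t] s0 by simp
    ultimately show False using ne by simp
  qed
  have nt: "fst t - fst s \<noteq> 0" using ne by simp
  have f1: "fst h * (fst t - fst s) + snd h * (snd t - snd s) = 0" using eq ip[of s] ip[of t] by (simp add: algebra_simps)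
  have slv: "sl s t = (snd t - snd s) / (fst t - fst s)" by (simp add: sl_def)
  have fh: "fst h = - snd h * sl s t" using f1 nt unfolding slv by (simp add: field_simps)
  show ?thesis
  proof (intro exI[of _ "snd h"] conjI ballI)
    show "snd h \<noteq> 0" by (rule h2)
    fix q assume q: "q \<in> P"
    have "q \<in> closure ?S" using q clS by (auto intro: hull_inc)
    then have "inner h s \<le> inner h q" using h(2) eq by auto
    then have "0 \<le> inner h q - inner h s" by simp
    also have "inner h q - inner h s = snd h * (snd q - ht s t (fst q))"
      unfolding ip ht_def fh by (simp add: algebra_simps)
    finally show "0 \<le> snd h * (snd q - ht s t (fst q))" .
  qed
qed




locale tp =
  fixes P T c vs
  assumes T: "triangulation P T" and xi: "xinj P" and tpath: "is_tpath P T (vline c) vs"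
begin

lemma len: "2 \<le> length vs"
  using tpath unfolding is_tpath_def by auto

lemma sepP: "q \<in> P \<Longrightarrow> fst q \<noteq> c"
  using tpath unfolding is_tpath_def separating_line_def line_set_vline by auto

lemma edge: "Suc j < length vs \<Longrightarrow> {vs ! j, vs ! Suc j} \<in> tri_edges T"
  using tpath unfolding is_tpath_def by auto

lemma edge_props:
  assumes "Suc j < length vs"
  shows "vs ! j \<in> P" "vs ! Suc j \<in> P" "emp P (vs ! j) (vs ! Suc j)"
    "fst (vs ! j) \<noteq> fst (vs ! Suc j)" "(fst (vs ! j) < c) \<noteq> (fst (vs ! Suc j) < c)"
proof -
  note e = tri_edge_props[OF T edge[OF assms]]
  show "vs ! j \<in> P" "vs ! Suc j \<in> P" "emp P (vs ! j) (vs ! Suc j)" using e by auto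
  show "fst (vs ! j) \<noteq> fst (vs ! Suc j)" using e xi unfolding xinj_def by blast
  have "crosses_line (vline c) (vs ! j) (vs ! Suc j)" using tpath assms unfolding is_tpath_def by auto
  then show "(fst (vs ! j) < c) \<noteq> (fst (vs ! Suc j) < c)"
    using crosses_vline sepP e by blast
qed

lemma vs_in_P: "j < length vs \<Longrightarrow> vs ! j \<in> P"
proof -
  assume j: "j < length vs"
  show ?thesis
  proof (cases "Suc j < length vs")
    case True then show ?thesis using edge_props by blast
  next
    case False
    then have "j = Suc (j - 1)" "Suc (j - 1) < length vs" using j len by auto
    then show ?thesis using edge_props(2)[of "j - 1"] by simp
  qed
qed

definition Y :: "nat \<Rightarrow> real" where "Y j = ht (vs ! j) (vs ! Suc j) c"

lemma mono: "(\<forall>i j. i < j \<and> j < length vs - 1 \<longrightarrow> Y i < Y j) \<or> (\<forall>i j. i < j \<and> j < length vs - 1 \<longrightarrow> Y i > Y j)"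
proof -
  let ?ys = "map (\<lambda>j. along (vline c) (xpt (vline c) (vs ! j) (vs ! Suc j))) [0..<length vs - 1]"
  have ys: "?ys ! j = Y j" if "j < length vs - 1" for j
    using that edge_props(4)[of j] by (simp add: along_vline xpt_vline Y_def)
  have "sorted_wrt (<) ?ys \<or> sorted_wrt (>) ?ys" using tpath unfolding is_tpath_def Let_def by auto
  then show ?thesis unfolding sorted_wrt_iff_nth_less using ys by auto
qed

lemma region:
  assumes "0 < j" "Suc j < length vs"
  shows "convex hull {vs ! j, (c, ht (vs ! (j - 1)) (vs ! j) c), (c, ht (vs ! j) (vs ! Suc j) c)} \<inter> P \<subseteq> {vs ! j}"
proof -
  have j: "j = Suc (j - 1)" using assms by simp
  have "fst (vs ! (j - 1)) \<noteq> fst (vs ! j)" using edge_props(4)[of "j - 1"] assms j by simp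
  moreover have "fst (vs ! j) \<noteq> fst (vs ! Suc j)" using edge_props(4)[of j] assms by simp
  moreover have "convex hull {vs ! j, xpt (vline c) (vs ! (j - 1)) (vs ! j), xpt (vline c) (vs ! j) (vs ! Suc j)} \<inter> P \<subseteq> {vs ! j}"
    using tpath assms unfolding is_tpath_def by blast
  ultimately show ?thesis by (simp add: xpt_vline)
qed

lemma hull_first: "hull_edge P (vs ! 0) (vs ! 1)"
  using tpath unfolding is_tpath_def by auto
lemma hull_last: "hull_edge P (vs ! (length vs - 2)) (vs ! (length vs - 1))"
  using tpath unfolding is_tpath_def by auto
lemma first_last: "{vs ! 0, vs ! 1} \<noteq> {vs ! (length vs - 2), vs ! (length vs - 1)}"
  using tpath unfolding is_tpath_def by auto

lemma len3: "3 \<le> length vs"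
proof (rule ccontr)
  assume "\<not> 3 \<le> length vs"
  then have "length vs = 2" using len by simp
  then show False using first_last by simp
qed

end

lemma cross_lemma:
  assumes T: "triangulation P T" and xi: "xinj P"
    and e1: "{a, r} \<in> tri_edges T" and e2: "{pp, ob} \<in> tri_edges T" and dif: "{a, r} \<noteq> {pp, ob}"
    and sa: "(fst a < c) \<noteq> (fst pp < c)" and so: "(fst ob < c) \<noteq> (fst pp < c)"
    and sr: "min c (fst r) < fst pp" "fst pp < max c (fst r)"
    and sg: "(ht a r c - ht pp ob c < 0) \<noteq> (ht a r (fst pp) - snd pp < 0)"
    and n1: "ht a r c \<noteq> ht pp ob c" and n2: "ht a r (fst pp) \<noteq> snd pp"
    and pc: "fst pp \<noteq> c"
  shows False
proof -
  note p1 = tri_edge_props[OF T e1] and p2 = tri_edge_props[OF T e2]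
  have ne: "fst a \<noteq> fst r" "fst pp \<noteq> fst ob" using p1 p2 xi unfolding xinj_def by blast+
  define f where "f x = ht a r x - ht pp ob x" for x
  obtain A B where AB: "\<And>x. f x = A + B * x" using ht_aff[of a r pp ob] unfolding f_def by blast
  have fm: "f (fst pp) = ht a r (fst pp) - snd pp" by (simp add: f_def)
  have "\<exists>x. min c (fst pp) < x \<and> x < max c (fst pp) \<and> f x = 0"
  proof (cases "f c < 0")
    case True
    then have "0 < f (fst pp)" using sg n2 fm unfolding f_def by auto
    then show ?thesis using aff_zero[OF AB True] by blast
  next
    case False
    then have fc: "0 < f c" using n1 unfolding f_def by auto
    then have fp: "f (fst pp) < 0" using sg n2 fm unfolding f_def by auto
    have AB': "\<And>x. (- f x) = (- A) + (- B) * x" using AB by simp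
    obtain x where "min c (fst pp) < x" "x < max c (fst pp)" "- f x = 0"
      using aff_zero[of "\<lambda>x. - f x", OF AB'] fc fp by auto
    then show ?thesis by auto
  qed
  then obtain x0 where x0: "min c (fst pp) < x0" "x0 < max c (fst pp)" "f x0 = 0" by blast
  have r1: "min (fst a) (fst r) < x0" "x0 < max (fst a) (fst r)"
    using x0 sa sr by (auto simp: min_def max_def split: if_splits)
  have r2: "min (fst pp) (fst ob) < x0" "x0 < max (fst pp) (fst ob)"
    using x0 so by (auto simp: min_def max_def split: if_splits)
  have "(x0, ht a r x0) \<in> open_segment a r" using open_seg_pt r1 by blast
  moreover have "(x0, ht pp ob x0) \<in> open_segment pp ob" using open_seg_pt r2 by blast
  moreover have "ht pp ob x0 = ht a r x0" using x0(3) by (simp add: f_def)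
  ultimately show False using tri_no_cross[OF T xi e1 e2 dif] by auto
qed

lemma deg_le2:
  assumes T: "triangulation P T" and xi: "xinj P" and tpath: "is_tpath P T (vline c) vs"
    and pP: "pp \<in> P"
    and iso: "\<forall>q\<in>P. q \<noteq> pp \<longrightarrow> \<not> (min c (fst pp) \<le> fst q \<and> fst q \<le> max c (fst pp))"
  shows "tdeg pp vs \<in> {0, 1, 2}"
proof -
  interpret tp P T c vs using T xi tpath by unfold_locales
  have pc: "fst pp \<noteq> c" using sepP pP by blast
  have once: False if jk: "j < k" "k < length vs" "vs ! j = pp" "vs ! k = pp" for j k
  proof -
    have "k \<noteq> Suc j" using edge_props(4)[of j] jk by auto
    then have k2: "Suc (Suc j) \<le> k" using jk by simp
    define a where "a = vs ! Suc j"
    define r where "r = vs ! Suc (Suc j)"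
    have ej: "Suc j < length vs" "Suc (Suc j) < length vs" using k2 jk by auto
    note E0 = edge_props[OF ej(1)] and E1 = edge_props[OF ej(2)]
    note M = mono
    show False
    proof (cases "r = pp")
      case True
      have "Y j = Y (Suc j)" unfolding Y_def using jk(3) True ht_sym E0(4)
        by (simp add: r_def)
      moreover have "j < Suc j" "Suc j < length vs - 1" using ej by auto
      ultimately show False using M by fastforce
    next
      case False
      then have k3: "Suc (Suc (Suc j)) \<le> k" using k2 jk(4) r_def by (cases "k = Suc (Suc j)") auto
      define b where "b = vs ! (k - 1)"
      have kk: "Suc (k - 1) = k" "Suc (k - 1) < length vs" using k3 jk by auto
      note E2 = edge_props[of "k - 1", unfolded kk(1)]
      have E2': "{pp, b} \<in> tri_edges T" using edge[of "k - 1"] kk jk(4) b_def by (simp add: insert_commute)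
      have e1: "{a, r} \<in> tri_edges T" using edge[OF ej(2)] a_def r_def by simp
      have e0: "{pp, a} \<in> tri_edges T" using edge[OF ej(1)] a_def jk(3) by simp
      have rP: "r \<in> P" and aP: "a \<in> P" using E1 a_def r_def by auto
      have sa: "(fst a < c) \<noteq> (fst pp < c)" using E0(5) a_def jk(3) by simp
      have sr0: "(fst r < c) = (fst pp < c)" using E1(5) E0(5) a_def r_def jk(3) by simp
      have sb: "(fst b < c) \<noteq> (fst pp < c)" using E2(5) kk jk(4) b_def by simp
      have rc: "fst r \<noteq> c" using sepP rP by blast
      have sr: "min c (fst r) < fst pp" "fst pp < max c (fst r)"
      proof -
        have "\<not> (min c (fst pp) \<le> fst r \<and> fst r \<le> max c (fst pp))" using iso rP False by blast
        then show "min c (fst r) < fst pp" "fst pp < max c (fst r)"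
          using sr0 pc rc by (cases "fst pp < c"; simp add: min_def max_def split: if_splits)+
      qed
      have Yj: "Y j = ht pp a c" unfolding Y_def using jk(3) a_def by simp
      have Yj1: "Y (Suc j) = ht a r c" unfolding Y_def using a_def r_def by simp
      have Yk: "Y (k - 1) = ht pp b c" unfolding Y_def using kk jk(4) b_def ht_sym E2(4) by simp
      have bet: "(Y j < Y (Suc j) \<and> Y (Suc j) < Y (k - 1)) \<or> (Y j > Y (Suc j) \<and> Y (Suc j) > Y (k - 1))"
      proof -
        have i1: "j < Suc j \<and> Suc j < length vs - 1" using k3 jk(2) by arith
        have i2: "Suc j < k - 1 \<and> k - 1 < length vs - 1" using k3 jk(2) by arith
        from M show ?thesis
        proof
          assume A: "\<forall>i j. i < j \<and> j < length vs - 1 \<longrightarrow> Y i < Y j"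
          show ?thesis using A[rule_format, OF i1] A[rule_format, OF i2] by simp
        next
          assume A: "\<forall>i j. i < j \<and> j < length vs - 1 \<longrightarrow> Y i > Y j"
          show ?thesis using A[rule_format, OF i1] A[rule_format, OF i2] by simp
        qed
      qed
      have ar: "fst a \<noteq> fst r" using E1(4) a_def r_def by simp
      have nar: "ht a r (fst pp) \<noteq> snd pp"
      proof
        assume h: "ht a r (fst pp) = snd pp"
        have "min (fst a) (fst r) < fst pp" "fst pp < max (fst a) (fst r)"
          using sa sr by (auto simp: min_def max_def split: if_splits)
        then have "(fst pp, ht a r (fst pp)) \<in> open_segment a r" using open_seg_pt by blast
        then have "pp \<in> closed_segment a r" using h by (simp add: open_segment_def)
        then have "pp \<in> {a, r}" using E1(3) pP a_def r_def unfolding emp_def by blast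
        then show False using sa False by auto
      qed
      have d1: "{a, r} \<noteq> {pp, a}" "{a, r} \<noteq> {pp, b}" using False sa by (auto simp: doubleton_eq_iff)
      show False
      proof (cases "ht a r (fst pp) - snd pp < 0")
        case neg: True
        have "ht pp a c < ht a r c \<or> ht pp b c < ht a r c" using bet Yj Yj1 Yk by auto
        then show ?thesis
        proof
          assume h: "ht pp a c < ht a r c"
          show False by (rule cross_lemma[OF T xi e1 e0 d1(1) sa sa sr _ _ nar pc]) (use h neg in auto)
        next
          assume h: "ht pp b c < ht a r c"
          show False by (rule cross_lemma[OF T xi e1 E2' d1(2) sa sb sr _ _ nar pc]) (use h neg in auto)
        qed
      next
        case pos: False
        have "ht pp a c > ht a r c \<or> ht pp b c > ht a r c" using bet Yj Yj1 Yk by auto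
        then show ?thesis
        proof
          assume h: "ht pp a c > ht a r c"
          show False by (rule cross_lemma[OF T xi e1 e0 d1(1) sa sa sr _ _ nar pc]) (use h pos in auto)
        next
          assume h: "ht pp b c > ht a r c"
          show False by (rule cross_lemma[OF T xi e1 E2' d1(2) sa sb sr _ _ nar pc]) (use h pos in auto)
        qed
      qed
    qed
  qed
  let ?E = "{e \<in> path_edges vs. pp \<in> e}"
  have "card ?E \<le> 2"
  proof (cases "\<exists>j0<length vs. vs ! j0 = pp")
    case False
    have nf: "\<forall>j0<length vs. vs ! j0 \<noteq> pp" using False by simp
    have "vs ! j \<noteq> pp \<and> vs ! Suc j \<noteq> pp" if "Suc j < length vs" for j
    proof -
      have "j < length vs" using that by simp
      then show ?thesis using nf that by simp
    qed
    then have "?E = {}" unfolding path_edges_def by auto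
    then show ?thesis by (simp only: card.empty zero_le)
  next
    case True
    then obtain j0 where j0: "j0 < length vs" "vs ! j0 = pp" by blast
    have uniq: "j = j0" if "j < length vs" "vs ! j = pp" for j
      using once[of j j0] once[of j0 j] that j0 by (cases "j < j0"; cases "j0 < j") auto
    have "?E \<subseteq> {{vs ! (j0 - 1), pp}, {pp, vs ! Suc j0}}"
    proof
      fix e assume "e \<in> ?E"
      then obtain j where j: "e = {vs ! j, vs ! Suc j}" "Suc j < length vs" "pp \<in> e"
        unfolding path_edges_def by auto
      then have "vs ! j = pp \<or> vs ! Suc j = pp" by auto
      then show "e \<in> {{vs ! (j0 - 1), pp}, {pp, vs ! Suc j0}}"
      proof
        assume "vs ! j = pp" then have "j = j0" using uniq j by simp
        then have "e = {pp, vs ! Suc j0}" using j(1) j0(2) by simp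
        then show ?thesis by simp
      next
        assume "vs ! Suc j = pp" then have "Suc j = j0" using uniq j by simp
        then have "j = j0 - 1" by simp
        then have "e = {vs ! (j0 - 1), pp}" using j(1) j0(2) \<open>Suc j = j0\<close> by simp
        then show ?thesis by simp
      qed
    qed
    moreover have "card {{vs ! (j0 - 1), pp}, {pp, vs ! Suc j0}} \<le> 2" by (simp add: card_insert_if)
    ultimately show ?thesis by (meson card_mono finite.emptyI finite.insertI le_trans)
  qed
  then show ?thesis unfolding tdeg_def by auto
qed




lemma sep:
  assumes "fst l1 < c1" "c2 < fst r1" "fst l2 < c1" "c2 < fst r2" "c1 < m" "m < c2"
    and nc: "open_segment l1 r1 \<inter> open_segment l2 r2 = {}"
    and hm: "ht l1 r1 m < ht l2 r2 m"
    and x: "max (fst l1) (fst l2) \<le> x" "x \<le> min (fst r1) (fst r2)"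
  shows "ht l1 r1 x \<le> ht l2 r2 x"
proof (rule ccontr)
  assume "\<not> ?thesis"
  then have hx: "0 < ht l1 r1 x - ht l2 r2 x" by simp
  obtain A B where AB: "\<And>t. ht l1 r1 t - ht l2 r2 t = A + B * t" using ht_aff[of l1 r1 l2 r2] by blast
  obtain x0 where x0: "min m x < x0" "x0 < max m x" "ht l1 r1 x0 - ht l2 r2 x0 = 0"
    using aff_zero[of "\<lambda>t. ht l1 r1 t - ht l2 r2 t", OF AB] hm hx by auto
  have r1: "min (fst l1) (fst r1) < x0" "x0 < max (fst l1) (fst r1)"
    using x0 x assms(1-6) by (auto simp: min_def max_def split: if_splits)
  have r2: "min (fst l2) (fst r2) < x0" "x0 < max (fst l2) (fst r2)"
    using x0 x assms(1-6) by (auto simp: min_def max_def split: if_splits)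
  have "(x0, ht l1 r1 x0) \<in> open_segment l1 r1" using open_seg_pt r1 by blast
  moreover have "(x0, ht l2 r2 x0) \<in> open_segment l2 r2" using open_seg_pt r2 by blast
  moreover have "ht l1 r1 x0 = ht l2 r2 x0" using x0(3) by simp
  ultimately show False using nc by auto
qed

lemma on_seg_contra:
  assumes "emp P s q" "w \<in> P" "w \<noteq> s" "w \<noteq> q"
    "min (fst s) (fst q) < fst w" "fst w < max (fst s) (fst q)" "ht s q (fst w) = snd w"
  shows False
proof -
  have "(fst w, ht s q (fst w)) \<in> open_segment s q" using open_seg_pt assms(5,6) by blast
  moreover have "(fst w, ht s q (fst w)) = w" using assms(7) by (simp add: prod_eq_iff)
  ultimately have "w \<in> closed_segment s q" by (simp add: open_segment_def)
  then show False using assms(1-4) unfolding emp_def by blast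
qed

lemma trap_R:
  assumes xi: "xinj P" and PP: "w \<in> P" "q \<in> P"
    and L: "fst u < c1" "fst d < c1" "fst s < c1" and R: "c2 < fst w" "c2 < fst q"
    and m: "c1 < m" "m < c2"
    and e: "emp P s q"
    and nc1: "open_segment s q \<inter> open_segment u w = {}"
    and nc2: "open_segment d w \<inter> open_segment s q = {}"
    and h1: "ht d w m < ht s q m" and h2: "ht s q m < ht u w m"
    and reg: "convex hull {w, (c2, ht w u c2), (c2, ht w d c2)} \<inter> P \<subseteq> {w}"
  shows "q = w"
proof -
  have ne: "fst s \<noteq> fst q" "fst u \<noteq> fst w" "fst d \<noteq> fst w" using L R m by auto
  consider "fst q < fst w" | "fst w < fst q" | "fst q = fst w" by linarith
  then show ?thesis
  proof cases
    case 1
    have a1: "ht s q (fst q) \<le> ht u w (fst q)"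
      by (rule sep[OF L(3) R(2) L(1) R(1) m nc1 h2]) (use 1 L R m in auto)
    have a2: "ht d w (fst q) \<le> ht s q (fst q)"
      by (rule sep[OF L(2) R(1) L(3) R(2) m nc2 h1]) (use 1 L R m in auto)
    have sq: "ht s q (fst q) = snd q" using ht_snd[OF ne(1)] .
    have "q \<in> convex hull {w, (c2, ht w u c2), (c2, ht w d c2)}"
      by (rule tri_pt) (use 1 R a1 a2 sq ht_sym[OF ne(2)] ht_sym[OF ne(3)] in auto)
    then show ?thesis using reg PP by auto
  next
    case 2
    have a1: "ht s q (fst w) \<le> ht u w (fst w)"
      by (rule sep[OF L(3) R(2) L(1) R(1) m nc1 h2]) (use 2 L R m in auto)
    have a2: "ht d w (fst w) \<le> ht s q (fst w)"
      by (rule sep[OF L(2) R(1) L(3) R(2) m nc2 h1]) (use 2 L R m in auto)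
    have "ht u w (fst w) = snd w" "ht d w (fst w) = snd w" using ht_snd ne by auto
    then have hw: "ht s q (fst w) = snd w" using a1 a2 by simp
    have False by (rule on_seg_contra[OF e PP(1) _ _ _ _ hw]) (use 2 L R m in auto)
    then show ?thesis by simp
  next
    case 3
    then show ?thesis using xi PP unfolding xinj_def by blast
  qed
qed

lemma trap_L:
  assumes xi: "xinj P" and PP: "v \<in> P" "q \<in> P"
    and L: "fst v < c1" "fst q < c1" and R: "c2 < fst a" "c2 < fst b" "c2 < fst r"
    and m: "c1 < m" "m < c2"
    and e: "emp P q r"
    and nc1: "open_segment q r \<inter> open_segment v a = {}"
    and nc2: "open_segment v b \<inter> open_segment q r = {}"
    and h1: "ht v b m < ht q r m" and h2: "ht q r m < ht v a m"
    and reg: "convex hull {v, (c1, ht v a c1), (c1, ht v b c1)} \<inter> P \<subseteq> {v}"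
  shows "q = v"
proof -
  have ne: "fst q \<noteq> fst r" "fst v \<noteq> fst a" "fst v \<noteq> fst b" using L R m by auto
  consider "fst v < fst q" | "fst q < fst v" | "fst q = fst v" by linarith
  then show ?thesis
  proof cases
    case 1
    have a1: "ht q r (fst q) \<le> ht v a (fst q)"
      by (rule sep[OF L(2) R(3) L(1) R(1) m nc1 h2]) (use 1 L R m in auto)
    have a2: "ht v b (fst q) \<le> ht q r (fst q)"
      by (rule sep[OF L(1) R(2) L(2) R(3) m nc2 h1]) (use 1 L R m in auto)
    have sq: "ht q r (fst q) = snd q" by simp
    have "q \<in> convex hull {v, (c1, ht v a c1), (c1, ht v b c1)}"
      by (rule tri_pt) (use 1 L a1 a2 sq in auto)
    then show ?thesis using reg PP by auto
  next
    case 2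
    have a1: "ht q r (fst v) \<le> ht v a (fst v)"
      by (rule sep[OF L(2) R(3) L(1) R(1) m nc1 h2]) (use 2 L R m in auto)
    have a2: "ht v b (fst v) \<le> ht q r (fst v)"
      by (rule sep[OF L(1) R(2) L(2) R(3) m nc2 h1]) (use 2 L R m in auto)
    then have hw: "ht q r (fst v) = snd v" using a1 a2 by simp
    have False by (rule on_seg_contra[OF e PP(1) _ _ _ _ hw]) (use 2 L R m in auto)
    then show ?thesis by simp
  next
    case 3
    then show ?thesis using xi PP unfolding xinj_def by blast
  qed
qed




lemma final_contra:
  assumes xi: "xinj P"
    and PP: "v \<in> P" "a \<in> P" "b \<in> P" "u \<in> P" "d \<in> P" "w \<in> P"
    and L: "fst v < c1" "fst u < c1" "fst d < c1"
    and R: "c2 < fst a" "c2 < fst b" "c2 < fst w"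
    and m: "c1 < m" "m < c2"
    and E: "emp P v a" "emp P v b" "emp P u w" "emp P d w"
    and NC: "\<And>x y. x \<in> {a, b} \<Longrightarrow> y \<in> {u, d} \<Longrightarrow>
              {v, x} = {y, w} \<or> open_segment v x \<inter> open_segment y w = {}"
    and hv: "ht v b m < yy" "yy < ht v a m"
    and hw: "ht d w m < yy" "yy < ht u w m"
    and regv: "convex hull {v, (c1, ht v a c1), (c1, ht v b c1)} \<inter> P \<subseteq> {v}"
    and regw: "convex hull {w, (c2, ht w u c2), (c2, ht w d c2)} \<inter> P \<subseteq> {w}"
  shows False
proof -
  have xR: "c2 < fst x" if "x \<in> {a, b}" for x using that R by auto
  have yL: "fst y < c1" if "y \<in> {u, d}" for y using that L by auto
  have eqv: "v = y \<and> x = w" if "x \<in> {a, b}" "y \<in> {u, d}" "{v, x} = {y, w}" for x y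
  proof -
    have "fst v < c1" "c2 < fst x" "fst y < c1" "c2 < fst w" using L R xR[OF that(1)] yL[OF that(2)] by auto
    then show ?thesis using that(3) m by (auto simp: doubleton_eq_iff)
  qed
  have dis: "open_segment v x \<inter> open_segment y w = {}"
    if "x \<in> {a, b}" "y \<in> {u, d}" "ht v x m \<noteq> ht y w m" for x y
    using NC[OF that(1,2)] eqv[OF that(1,2)] that(3) by auto
  have eqh: "v = y \<and> x = w" if "x \<in> {a, b}" "y \<in> {u, d}" "ht v x m = ht y w m" for x y
  proof (rule ccontr)
    assume "\<not> (v = y \<and> x = w)"
    then have d0: "open_segment v x \<inter> open_segment y w = {}" using NC[OF that(1,2)] eqv[OF that(1,2)] by blast
    have "min (fst v) (fst x) < m" "m < max (fst v) (fst x)" using L xR[OF that(1)] m by auto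
    then have "(m, ht v x m) \<in> open_segment v x" using open_seg_pt by blast
    moreover have "min (fst y) (fst w) < m" "m < max (fst y) (fst w)" using R yL[OF that(2)] m by auto
    then have "(m, ht y w m) \<in> open_segment y w" using open_seg_pt by blast
    ultimately show False using d0 that(3) by auto
  qed
  note Ea = E(1) and Eb = E(2) and Eu = E(3) and Ed = E(4)
  have TR: "x = w" if "x \<in> {a, b}" "ht d w m < ht v x m" "ht v x m < ht u w m" "emp P v x" for x
  proof -
    have xP: "x \<in> P" using that(1) PP by auto
    have n1: "open_segment v x \<inter> open_segment u w = {}" using dis[OF that(1), of u] that(3) by auto
    have n2: "open_segment d w \<inter> open_segment v x = {}" using dis[OF that(1), of d] that(2) by auto
    show ?thesis
      by (rule trap_R[OF xi PP(6) xP L(2) L(3) L(1) R(3) xR[OF that(1)] m that(4) n1 n2 that(2,3) regw])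
  qed
  have TL: "y = v" if "y \<in> {u, d}" "ht v b m < ht y w m" "ht y w m < ht v a m" "emp P y w" for y
  proof -
    have yP: "y \<in> P" using that(1) PP by auto
    have n1: "open_segment y w \<inter> open_segment v a = {}" using dis[of a y] that(1,3) by auto
    have n2: "open_segment v b \<inter> open_segment y w = {}" using dis[of b y] that(1,2) by auto
    show ?thesis
      by (rule trap_L[OF xi PP(1) yP L(1) yL[OF that(1)] R(1) R(2) R(3) m that(4) n1 n2 that(2,3) regv])
  qed
  consider "ht v a m < ht u w m" | "ht u w m < ht v a m" | "ht v a m = ht u w m" by linarith
  then show False
  proof cases
    case 1
    have aw: "a = w" using TR[of a] 1 hv hw Ea by auto
    consider "ht d w m < ht v b m" | "ht v b m < ht d w m" | "ht v b m = ht d w m" by linarith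
    then show False
    proof cases
      case 1
      have "b = w" using TR[of b] 1 hv hw Eb by auto
      then show False using aw hv by simp
    next
      case 2
      have "d = v" using TL[of d] 2 hv hw Ed by auto
      then show False using aw hv hw by simp
    next
      case 3
      have "b = w" using eqh[of b d] 3 by auto
      then show False using aw hv by simp
    qed
  next
    case 2
    have uv: "u = v" using TL[of u] 2 hv hw Eu by auto
    consider "ht d w m < ht v b m" | "ht v b m < ht d w m" | "ht v b m = ht d w m" by linarith
    then show False
    proof cases
      case 1
      have "b = w" using TR[of b] 1 hv hw Eb by auto
      then show False using uv hv hw by simp
    next
      case 2
      have "d = v" using TL[of d] 2 hv hw Ed by auto
      then show False using uv hw by simp
    next
      case 3
      have "d = v" using eqh[of b d] 3 by auto
      then show False using uv hw by simp
    qed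
  next
    case 3
    have uv: "u = v" "a = w" using eqh[of a u] 3 by auto
    consider "ht d w m < ht v b m" | "ht v b m < ht d w m" | "ht v b m = ht d w m" by linarith
    then show False
    proof cases
      case 1
      have "b = w" using TR[of b] 1 hv hw Eb by auto
      then show False using uv hv by simp
    next
      case 2
      have "d = v" using TL[of d] 2 hv hw Ed by auto
      then show False using uv hw by simp
    next
      case 3
      have "b = w" using eqh[of b d] 3 by auto
      then show False using uv hv by simp
    qed
  qed
qed




lemma disc_ivt:
  fixes f :: "nat \<Rightarrow> real"
  shows "(f 0 < y) \<noteq> (f n < y) \<Longrightarrow> \<exists>j<n. (f j < y) \<noteq> (f (Suc j) < y)"
proof (induction n)
  case 0 then show ?case by simp
next
  case (Suc n)
  show ?case
  proof (cases "(f 0 < y) \<noteq> (f n < y)")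
    case True then show ?thesis using Suc.IH by (meson less_Suc_eq)
  next
    case False then show ?thesis using Suc.prems by auto
  qed
qed

lemma emp_sym: "emp P a b = emp P b a"
  unfolding emp_def by (auto simp: closed_segment_commute)

lemma tri_int_hull:
  assumes T: "triangulation P T" and ne: "P \<noteq> {}"
  shows "interior (convex hull P) \<noteq> {}"
proof -
  have "P \<subseteq> convex hull P" by (rule hull_subset)
  then have "convex hull P \<noteq> {}" using ne by blast
  have "T \<noteq> {}"
  proof
    assume "T = {}"
    then have "convex hull P = {}" using T unfolding triangulation_def by auto
    then show False using \<open>convex hull P \<noteq> {}\<close> by simp
  qed
  then obtain t where t: "t \<in> T" by blast
  have "t \<subseteq> P" using T t unfolding triangulation_def by auto
  then have "interior (convex hull t) \<subseteq> interior (convex hull P)" by (intro interior_mono hull_mono)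
  then show ?thesis using tri_interior[OF T t] by auto
qed

lemma path_wedge:
  assumes T: "triangulation P T" and xi: "xinj P" and fin: "finite P"
    and tpath: "is_tpath P T (vline c) vs" and pP: "pp \<in> P"
    and np: "\<forall>j<length vs. vs ! j \<noteq> pp"
    and side: "\<forall>q\<in>P. q \<noteq> pp \<longrightarrow> fst q < c1 \<or> c2 < fst q"
    and pm: "c1 < fst pp" "fst pp < c2" and cc: "c1 \<le> c" "c \<le> c2"
  obtains v x1 x2 where "v \<in> P" "x1 \<in> P" "x2 \<in> P"
    "{v, x1} \<in> path_edges vs" "{v, x2} \<in> path_edges vs" "emp P v x1" "emp P v x2"
    "(fst v < c) \<noteq> (fst x1 < c)" "(fst v < c) \<noteq> (fst x2 < c)"
    "ht v x1 (fst pp) \<noteq> snd pp" "ht v x2 (fst pp) \<noteq> snd pp"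
    "(ht v x1 (fst pp) < snd pp) \<noteq> (ht v x2 (fst pp) < snd pp)"
    "convex hull {v, (c, ht v x1 c), (c, ht v x2 c)} \<inter> P \<subseteq> {v}"
proof -
  interpret tp P T c vs using T xi tpath by unfold_locales
  define m where "m = fst pp"
  define H where "H j = ht (vs ! j) (vs ! Suc j) m" for j
  have LR: "fst q < c1 \<or> c2 < fst q" if "j < length vs" "vs ! j = q" for j q
    using side vs_in_P that np by blast
  have Hne: "H j \<noteq> snd pp" if j: "Suc j < length vs" for j
  proof
    assume h: "H j = snd pp"
    note e = edge_props[OF j]
    have "(fst (vs ! j) < c) \<noteq> (fst (vs ! Suc j) < c)" using e by simp
    moreover have "fst (vs ! j) < c1 \<or> c2 < fst (vs ! j)" using LR[of j "vs ! j"] j by simp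
    moreover have "fst (vs ! Suc j) < c1 \<or> c2 < fst (vs ! Suc j)" using LR[of "Suc j" "vs ! Suc j"] j by simp
    ultimately have "min (fst (vs ! j)) (fst (vs ! Suc j)) < m" "m < max (fst (vs ! j)) (fst (vs ! Suc j))"
      using pm cc unfolding m_def by (auto simp: min_def max_def split: if_splits)
    moreover have "pp \<noteq> vs ! j" using np[rule_format, of j] j by simp
    moreover have "pp \<noteq> vs ! Suc j" using np[rule_format, of "Suc j"] j by simp
    ultimately show False using on_seg_contra[OF e(3) pP] h unfolding H_def m_def by auto
  qed
  have l3: "3 \<le> length vs" by (rule len3)
  define K where "K = length vs - 2"
  have K: "0 < K" "Suc K < length vs" "Suc K = length vs - 1" using l3 unfolding K_def by auto
  have brk: "(H 0 < snd pp) \<noteq> (H K < snd pp)"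
  proof
    assume same: "(H 0 < snd pp) = (H K < snd pp)"
    have int: "interior (convex hull P) \<noteq> {}" using tri_int_hull[OF T] pP by auto
    have e0: "Suc 0 < length vs" using l3 by simp
    note E0 = edge_props[OF e0] and EK = edge_props[OF K(2)]
    have h0: "hull_edge P (vs ! 0) (vs ! Suc 0)" using hull_first by simp
    have hK: "hull_edge P (vs ! K) (vs ! Suc K)" using hull_last K unfolding K_def by simp
    obtain s0 where s0: "s0 \<noteq> 0" "\<forall>q\<in>P. 0 \<le> s0 * (snd q - ht (vs ! 0) (vs ! Suc 0) (fst q))"
      using hull_edge_side[OF fin int h0 E0(4)] by blast
    obtain s1 where s1: "s1 \<noteq> 0" "\<forall>q\<in>P. 0 \<le> s1 * (snd q - ht (vs ! K) (vs ! Suc K) (fst q))"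
      using hull_edge_side[OF fin int hK EK(4)] by blast
    have y0: "0 < s0 * (snd pp - H 0)"
      using s0 pP Hne[OF e0] unfolding H_def m_def by (metis less_eq_real_def mult_eq_0_iff right_minus_eq)
    have y1: "0 < s1 * (snd pp - H K)"
      using s1 pP Hne[OF K(2)] unfolding H_def m_def by (metis less_eq_real_def mult_eq_0_iff right_minus_eq)
    have sg: "(0 < s0) = (0 < s1)"
      using y0 y1 same by (smt (verit, best) mult_neg_neg mult_pos_neg mult_pos_pos zero_less_mult_iff)
    define f where "f x = s0 * (ht (vs ! K) (vs ! Suc K) x - ht (vs ! 0) (vs ! Suc 0) x)" for x
    obtain A B where AB: "\<And>x. ht (vs ! K) (vs ! Suc K) x - ht (vs ! 0) (vs ! Suc 0) x = A + B * x"
      using ht_aff by blast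
    have ABf: "\<And>x. f x = s0 * A + (s0 * B) * x" unfolding f_def AB by (simp add: algebra_simps)
    have f1: "0 \<le> f (fst (vs ! K))" using s0(2) EK(1) unfolding f_def by (simp add: algebra_simps)
    have f2: "0 \<le> f (fst (vs ! Suc K))" using s0(2) EK(2) ht_snd[OF EK(4)] unfolding f_def by (simp add: algebra_simps)
    have cK: "min (fst (vs ! K)) (fst (vs ! Suc K)) \<le> c" "c \<le> max (fst (vs ! K)) (fst (vs ! Suc K))"
      using EK(5) by (auto simp: min_def max_def)
    have A1: "0 \<le> s0 * (Y K - Y 0)" using aff_nonneg[OF ABf f1 f2 cK] unfolding f_def Y_def by simp
    define g where "g x = s1 * (ht (vs ! 0) (vs ! Suc 0) x - ht (vs ! K) (vs ! Suc K) x)" for x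
    obtain A' B' where AB': "\<And>x. ht (vs ! 0) (vs ! Suc 0) x - ht (vs ! K) (vs ! Suc K) x = A' + B' * x"
      using ht_aff by blast
    have ABg: "\<And>x. g x = s1 * A' + (s1 * B') * x" unfolding g_def AB' by (simp add: algebra_simps)
    have g1: "0 \<le> g (fst (vs ! 0))" using s1(2) E0(1) unfolding g_def by (simp add: algebra_simps)
    have g2: "0 \<le> g (fst (vs ! Suc 0))" using s1(2) E0(2) ht_snd[OF E0(4)] unfolding g_def by (simp add: algebra_simps)
    have c0: "min (fst (vs ! 0)) (fst (vs ! Suc 0)) \<le> c" "c \<le> max (fst (vs ! 0)) (fst (vs ! Suc 0))"
      using E0(5) by (auto simp: min_def max_def)
    have A2: "0 \<le> s1 * (Y 0 - Y K)" using aff_nonneg[OF ABg g1 g2 c0] unfolding g_def Y_def by simp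
    have "Y 0 = Y K"
    proof (cases "0 < s0")
      case True
      then have "0 < s1" using sg by simp
      then show ?thesis using A1 A2 True by (smt (verit) zero_le_mult_iff)
    next
      case False
      then have "s0 < 0" "s1 < 0" using sg s0(1) s1(1) by auto
      then show ?thesis using A1 A2 by (smt (verit) mult_le_0_iff zero_le_mult_iff)
    qed
    moreover have "0 < K \<and> K < length vs - 1" using K by simp
    ultimately show False using mono by fastforce
  qed
  obtain j where j: "j < K" "(H j < snd pp) \<noteq> (H (Suc j) < snd pp)"
    using disc_ivt[of H "snd pp" K] brk by blast
  have j2: "Suc (Suc j) < length vs" using j K by simp
  define v where "v = vs ! Suc j"
  define x1 where "x1 = vs ! j"
  define x2 where "x2 = vs ! Suc (Suc j)"
  note Ea = edge_props[of j] and Eb = edge_props[of "Suc j"]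
  have j1: "Suc j < length vs" using j2 by simp
  have P3: "v \<in> P" "x1 \<in> P" "x2 \<in> P" using Ea[OF j1] Eb[OF j2] unfolding v_def x1_def x2_def by auto
  have pe: "{v, x1} \<in> path_edges vs" "{v, x2} \<in> path_edges vs"
    unfolding path_edges_def v_def x1_def x2_def using j1 j2 by (auto simp: insert_commute)
  have em: "emp P v x1" "emp P v x2" using Ea(3)[OF j1] Eb(3)[OF j2] emp_sym unfolding v_def x1_def x2_def by auto
  have sd: "(fst v < c) \<noteq> (fst x1 < c)" "(fst v < c) \<noteq> (fst x2 < c)"
    using Ea(5)[OF j1] Eb(5)[OF j2] unfolding v_def x1_def x2_def by auto
  have h1: "ht v x1 (fst pp) = H j" unfolding H_def m_def v_def x1_def using ht_sym Ea(4)[OF j1] by simp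
  have h2: "ht v x2 (fst pp) = H (Suc j)" unfolding H_def m_def v_def x2_def by simp
  have reg0: "convex hull {v, (c, ht x1 v c), (c, ht v x2 c)} \<inter> P \<subseteq> {v}"
    using region[of "Suc j"] j2 unfolding v_def x1_def x2_def by simp
  have "ht x1 v c = ht v x1 c" using ht_sym Ea(4)[OF j1] unfolding v_def x1_def by simp
  then have reg: "convex hull {v, (c, ht v x1 c), (c, ht v x2 c)} \<inter> P \<subseteq> {v}" using reg0 by simp
  show ?thesis
    by (rule that[OF P3 pe em sd]) (use h1 h2 Hne[OF j1] Hne[OF j2] j(2) reg in auto)
qed




lemma final_contra2:
  assumes xi: "xinj P"
    and PP: "v \<in> P" "x1 \<in> P" "x2 \<in> P" "y1 \<in> P" "y2 \<in> P" "w \<in> P"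
    and L: "fst v < c1" "fst y1 < c1" "fst y2 < c1"
    and R: "c2 < fst x1" "c2 < fst x2" "c2 < fst w"
    and m: "c1 < m" "m < c2"
    and E: "emp P v x1" "emp P v x2" "emp P y1 w" "emp P y2 w"
    and NC: "\<And>x y. x \<in> {x1, x2} \<Longrightarrow> y \<in> {y1, y2} \<Longrightarrow>
              {v, x} = {y, w} \<or> open_segment v x \<inter> open_segment y w = {}"
    and hv: "ht v x1 m \<noteq> yy" "ht v x2 m \<noteq> yy" "(ht v x1 m < yy) \<noteq> (ht v x2 m < yy)"
    and hw: "ht y1 w m \<noteq> yy" "ht y2 w m \<noteq> yy" "(ht y1 w m < yy) \<noteq> (ht y2 w m < yy)"
    and regv: "convex hull {v, (c1, ht v x1 c1), (c1, ht v x2 c1)} \<inter> P \<subseteq> {v}"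
    and regw: "convex hull {w, (c2, ht w y1 c2), (c2, ht w y2 c2)} \<inter> P \<subseteq> {w}"
  shows False
proof -
  have regv': "convex hull {v, (c1, ht v x2 c1), (c1, ht v x1 c1)} \<inter> P \<subseteq> {v}" using regv by (simp add: insert_commute)
  have regw': "convex hull {w, (c2, ht w y2 c2), (c2, ht w y1 c2)} \<inter> P \<subseteq> {w}" using regw by (simp add: insert_commute)
  have NC': "\<And>x y. x \<in> {x2, x1} \<Longrightarrow> y \<in> {y1, y2} \<Longrightarrow>
              {v, x} = {y, w} \<or> open_segment v x \<inter> open_segment y w = {}"
            "\<And>x y. x \<in> {x1, x2} \<Longrightarrow> y \<in> {y2, y1} \<Longrightarrow>
              {v, x} = {y, w} \<or> open_segment v x \<inter> open_segment y w = {}"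
            "\<And>x y. x \<in> {x2, x1} \<Longrightarrow> y \<in> {y2, y1} \<Longrightarrow>
              {v, x} = {y, w} \<or> open_segment v x \<inter> open_segment y w = {}"
    using NC by blast+
  show False
  proof (cases "ht v x1 m < yy")
    case v1: True
    then have v2: "yy < ht v x2 m" using hv by auto
    show False
    proof (cases "ht y1 w m < yy")
      case True
      then have "yy < ht y2 w m" using hw by auto
      then show False
        using final_contra[OF xi PP(1,3,2,5,4,6) L(1,3,2) R(2,1,3) m E(2,1,4,3) NC'(3) v1 v2 True _ regv' regw'] by simp
    next
      case False
      then have "ht y2 w m < yy" "yy < ht y1 w m" using hw by auto
      then show False
        using final_contra[OF xi PP(1,3,2,4,5,6) L(1,2,3) R(2,1,3) m E(2,1,3,4) NC'(1) v1 v2 _ _ regv' regw] by simp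
    qed
  next
    case v1: False
    then have v2: "ht v x2 m < yy" "yy < ht v x1 m" using hv by auto
    show False
    proof (cases "ht y1 w m < yy")
      case True
      then have "yy < ht y2 w m" using hw by auto
      then show False
        using final_contra[OF xi PP(1,2,3,5,4,6) L(1,3,2) R(1,2,3) m E(1,2,4,3) NC'(2) v2 True _ regv regw'] by simp
    next
      case False
      then have "ht y2 w m < yy" "yy < ht y1 w m" using hw by auto
      then show False
        using final_contra[OF xi PP(1,2,3,4,5,6) L(1,2,3) R(1,2,3) m E(1,2,3,4) NC v2 _ _ regv regw] by simp
    qed
  qed
qed




lemma path_edges_finite: "finite (path_edges vs)"
proof -
  have "path_edges vs \<subseteq> (\<lambda>j. {vs ! j, vs ! Suc j}) ` {..<length vs}"
    unfolding path_edges_def by auto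
  then show ?thesis by (rule finite_subset) simp
qed

lemma tdeg0_edges: "tdeg pp vs = 0 \<Longrightarrow> e \<in> path_edges vs \<Longrightarrow> pp \<notin> e"
  unfolding tdeg_def using path_edges_finite[of vs] by auto

lemma tdeg0_np:
  assumes "2 \<le> length vs" "tdeg pp vs = 0"
  shows "\<forall>j<length vs. vs ! j \<noteq> pp"
proof (intro allI impI notI)
  fix j assume j: "j < length vs" "vs ! j = pp"
  show False
  proof (cases "Suc j < length vs")
    case True
    then have "{vs ! j, vs ! Suc j} \<in> path_edges vs" unfolding path_edges_def by auto
    then show False using tdeg0_edges[OF assms(2)] j by auto
  next
    case False
    then have "j = Suc (j - 1)" "Suc (j - 1) < length vs" using j assms(1) by auto
    then have "{vs ! (j - 1), vs ! j} \<in> path_edges vs" unfolding path_edges_def by (metis (mono_tags, lifting) mem_Collect_eq)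
    then show False using tdeg0_edges[OF assms(2)] j by auto
  qed
qed

lemma between_minmax:
  fixes a b y :: real
  assumes "a \<noteq> y" "b \<noteq> y" "(a < y) \<noteq> (b < y)"
  shows "min a b \<le> y" "y \<le> max a b"
  using assms by (auto simp: min_def max_def)

lemma part3:
  assumes T: "triangulation P T" and T': "triangulation P T'" and xi: "xinj P" and fin: "finite P"
    and pP: "pp \<in> P"
    and side: "\<forall>q\<in>P. q \<noteq> pp \<longrightarrow> fst q < c1 \<or> c2 < fst q"
    and pm: "c1 < fst pp" "fst pp < c2"
    and t1: "is_tpath P T (vline c1) vs" and t2: "is_tpath P T' (vline c2) ws"
    and ncr: "\<not> tpaths_cross vs ws" and d1: "tdeg pp vs = 0" and d2: "tdeg pp ws = 0"
  shows False
proof -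
  interpret A: tp P T c1 vs using T xi t1 by unfold_locales
  interpret B: tp P T' c2 ws using T' xi t2 by unfold_locales
  have np1: "\<forall>j<length vs. vs ! j \<noteq> pp" using tdeg0_np[OF A.len d1] .
  have np2: "\<forall>j<length ws. ws ! j \<noteq> pp" using tdeg0_np[OF B.len d2] .
  have c12: "c1 \<le> c2" using pm by simp
  obtain v x1 x2 where V: "v \<in> P" "x1 \<in> P" "x2 \<in> P"
    "{v, x1} \<in> path_edges vs" "{v, x2} \<in> path_edges vs" "emp P v x1" "emp P v x2"
    "(fst v < c1) \<noteq> (fst x1 < c1)" "(fst v < c1) \<noteq> (fst x2 < c1)"
    "ht v x1 (fst pp) \<noteq> snd pp" "ht v x2 (fst pp) \<noteq> snd pp"
    "(ht v x1 (fst pp) < snd pp) \<noteq> (ht v x2 (fst pp) < snd pp)"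
    "convex hull {v, (c1, ht v x1 c1), (c1, ht v x2 c1)} \<inter> P \<subseteq> {v}"
    using path_wedge[OF T xi fin t1 pP np1 side pm order_refl c12] by blast
  obtain w y1 y2 where W: "w \<in> P" "y1 \<in> P" "y2 \<in> P"
    "{w, y1} \<in> path_edges ws" "{w, y2} \<in> path_edges ws" "emp P w y1" "emp P w y2"
    "(fst w < c2) \<noteq> (fst y1 < c2)" "(fst w < c2) \<noteq> (fst y2 < c2)"
    "ht w y1 (fst pp) \<noteq> snd pp" "ht w y2 (fst pp) \<noteq> snd pp"
    "(ht w y1 (fst pp) < snd pp) \<noteq> (ht w y2 (fst pp) < snd pp)"
    "convex hull {w, (c2, ht w y1 c2), (c2, ht w y2 c2)} \<inter> P \<subseteq> {w}"
    using path_wedge[OF T' xi fin t2 pP np2 side pm c12 order_refl] by blast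
  have nv: "v \<noteq> pp" "x1 \<noteq> pp" "x2 \<noteq> pp" using tdeg0_edges[OF d1] V(4,5) by auto
  have nw: "w \<noteq> pp" "y1 \<noteq> pp" "y2 \<noteq> pp" using tdeg0_edges[OF d2] W(4,5) by auto
  have bv: "min (ht v x1 (fst pp)) (ht v x2 (fst pp)) \<le> snd pp" "snd pp \<le> max (ht v x1 (fst pp)) (ht v x2 (fst pp))"
    using between_minmax[OF V(10,11,12)] by auto
  have bw: "min (ht w y1 (fst pp)) (ht w y2 (fst pp)) \<le> snd pp" "snd pp \<le> max (ht w y1 (fst pp)) (ht w y2 (fst pp))"
    using between_minmax[OF W(10,11,12)] by auto
  have vL: "fst v < c1"
  proof (rule ccontr)
    assume "\<not> fst v < c1"
    then have vR: "c2 < fst v" using side V(1) nv by auto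
    have "pp \<in> convex hull {v, (c1, ht v x1 c1), (c1, ht v x2 c1)}"
      by (rule tri_pt) (use vR pm bv in auto)
    then show False using V(13) pP nv by auto
  qed
  have xR: "c2 < fst x1" "c2 < fst x2" using vL V(8,9) side V(2,3) nv by auto
  have wR: "c2 < fst w"
  proof (rule ccontr)
    assume "\<not> c2 < fst w"
    then have wL: "fst w < c1" using side W(1) nw by auto
    have "pp \<in> convex hull {w, (c2, ht w y1 c2), (c2, ht w y2 c2)}"
      by (rule tri_pt) (use wL pm bw in auto)
    then show False using W(13) pP nw by auto
  qed
  have yL: "fst y1 < c1" "fst y2 < c1" using wR W(8,9) side W(2,3) nw pm by auto
  have NC: "{v, x} = {y, w} \<or> open_segment v x \<inter> open_segment y w = {}"
    if x: "x \<in> {x1, x2}" and y: "y \<in> {y1, y2}" for x y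
  proof (rule ccontr)
    assume "\<not> ?thesis"
    then obtain z where dif: "{v, x} \<noteq> {y, w}" and z: "z \<in> open_segment v x" "z \<in> open_segment y w" by blast
    have xP: "x \<in> P" "emp P v x" "c2 < fst x" "{v, x} \<in> path_edges vs" using x V xR by auto
    have yP: "y \<in> P" "emp P y w" "fst y < c1" "{y, w} \<in> path_edges ws"
      using y W yL emp_sym[of P w y] by (auto simp: insert_commute)
    have "proper_cross {v, x} {y, w}"
      by (rule proper_cross_intro[OF V(1) xP(1) yP(1) W(1) xi xP(2) yP(2) _ _ z dif])
         (use vL xP(3) yP(3) wR pm in auto)
    then show False using ncr xP(4) yP(4) unfolding tpaths_cross_def by blast
  qed
  have nwy: "fst w \<noteq> fst y1" "fst w \<noteq> fst y2" using wR yL pm by auto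
  show False
    by (rule final_contra2[OF xi V(1,2,3) W(2,3,1) vL yL xR wR pm V(6,7)
          emp_sym[THEN iffD1, OF W(6)] emp_sym[THEN iffD1, OF W(7)] NC V(10,11,12) _ _ _ V(13) W(13)])
       (use W(10,11,12) ht_sym[OF nwy(1)] ht_sym[OF nwy(2)] in auto)
qed




lemma strict_mono_fst:
  fixes p :: "nat \<Rightarrow> real \<times> real"
  assumes sorted: "\<forall>j\<in>{1..<n}. fst (p j) < fst (p (Suc j))"
  shows "1 \<le> j \<Longrightarrow> j < k \<Longrightarrow> k \<le> n \<Longrightarrow> fst (p j) < fst (p k)"
proof (induction k)
  case 0 then show ?case by simp
next
  case (Suc k)
  show ?case
  proof (cases "j = k")
    case True
    then show ?thesis using sorted Suc.prems by auto
  next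
    case False
    then have "fst (p j) < fst (p k)" using Suc by auto
    moreover have "fst (p k) < fst (p (Suc k))" using sorted Suc.prems False by auto
    ultimately show ?thesis by linarith
  qed
qed

theorem lemma5:
  fixes p :: "nat \<Rightarrow> real \<times> real" and n i :: nat and c :: "nat \<Rightarrow> real" and P :: "(real \<times> real) set"
  assumes P_def: "P = p ` {1..n}"
    and sorted: "\<forall>j\<in>{1..<n}. fst (p j) < fst (p (Suc j))"
    and left: "fst (p 1) < c 1"
    and right: "c (n - 1) < fst (p n)"
    and slabs: "\<forall>j\<in>{2..n - 1}. \<forall>q\<in>P. (c (j - 1) < fst q \<and> fst q < c j) \<longleftrightarrow> q = p j"
    and i: "1 \<le> i" "i \<le> n - 2"
  shows "(\<forall>T vs. triangulation P T \<and> is_tpath P T (vline (c i)) vs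
            \<longrightarrow> tdeg (p (Suc i)) vs \<in> {0, 1, 2}) \<and>
         (\<forall>T vs. triangulation P T \<and> is_tpath P T (vline (c (Suc i))) vs
            \<longrightarrow> tdeg (p (Suc i)) vs \<in> {0, 1, 2}) \<and>
         (\<forall>T T' vs ws. triangulation P T \<and> triangulation P T' \<and>
            is_tpath P T (vline (c i)) vs \<and> is_tpath P T' (vline (c (Suc i))) ws \<and>
            \<not> tpaths_cross vs ws
            \<longrightarrow> tdeg (p (Suc i)) vs \<noteq> 0 \<or> tdeg (p (Suc i)) ws \<noteq> 0)"
proof -
  define pp where "pp = p (Suc i)"
  have n3: "3 \<le> n" using i by simp
  have mono: "fst (p j) < fst (p k)" if "1 \<le> j" "j < k" "k \<le> n" for j k
    using strict_mono_fst[OF sorted] that by blast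
  have xi: "xinj P" unfolding xinj_def P_def
  proof (intro ballI impI)
    fix q q' assume q: "q \<in> p ` {1..n}" "q' \<in> p ` {1..n}" "fst q = fst q'"
    then obtain j k where jk: "j \<in> {1..n}" "k \<in> {1..n}" "q = p j" "q' = p k" by blast
    show "q = q'"
    proof (cases "j = k")
      case True then show ?thesis using jk by simp
    next
      case False
      then have "j < k \<or> k < j" by auto
      then show ?thesis using mono jk q(3) by (metis atLeastAtMost_iff less_irrefl)
    qed
  qed
  have fin: "finite P" unfolding P_def by simp
  have pP: "pp \<in> P" unfolding P_def pp_def using i by auto
  have si: "Suc i \<in> {2..n - 1}" using i by auto
  have "(c (Suc i - 1) < fst pp \<and> fst pp < c (Suc i)) \<longleftrightarrow> pp = p (Suc i)"
    using slabs si pP by blast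
  then have pm: "c i < fst pp" "fst pp < c (Suc i)" unfolding pp_def by auto
  have low: "fst (p i) < c i"
  proof (cases "i = 1")
    case True then show ?thesis using left by simp
  next
    case False
    then have "i \<in> {2..n - 1}" "p i \<in> P" using i unfolding P_def by auto
    then have "(c (i - 1) < fst (p i) \<and> fst (p i) < c i) \<longleftrightarrow> p i = p i" using slabs by blast
    then show ?thesis by simp
  qed
  have high: "c (Suc i) < fst (p (Suc (Suc i)))"
  proof (cases "Suc (Suc i) = n")
    case True then show ?thesis using right by (metis diff_Suc_1)
  next
    case False
    then have "Suc (Suc i) \<in> {2..n - 1}" "p (Suc (Suc i)) \<in> P" using i unfolding P_def by auto
    then have "(c (Suc (Suc i) - 1) < fst (p (Suc (Suc i))) \<and> fst (p (Suc (Suc i))) < c (Suc (Suc i))) \<longleftrightarrow> p (Suc (Suc i)) = p (Suc (Suc i))" using slabs by blast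
    then show ?thesis by simp
  qed
  have side: "\<forall>q\<in>P. q \<noteq> pp \<longrightarrow> fst q < c i \<or> c (Suc i) < fst q"
  proof (intro ballI impI)
    fix q assume q: "q \<in> P" "q \<noteq> pp"
    then obtain j where j: "j \<in> {1..n}" "q = p j" unfolding P_def by blast
    have "j \<noteq> Suc i" using q j unfolding pp_def by auto
    then consider "j \<le> i" | "Suc (Suc i) \<le> j" by linarith
    then show "fst q < c i \<or> c (Suc i) < fst q"
    proof cases
      case 1
      have "i \<le> n" using i by simp
      then have "fst (p j) \<le> fst (p i)" using mono[of j i] j 1 by (cases "j = i") auto
      then show ?thesis using low j by simp
    next
      case 2
      then have "fst (p (Suc (Suc i))) \<le> fst (p j)" using mono[of "Suc (Suc i)" j] j by (cases "j = Suc (Suc i)") auto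
      then show ?thesis using high j by simp
    qed
  qed
  have iso1: "\<forall>q\<in>P. q \<noteq> pp \<longrightarrow> \<not> (min (c i) (fst pp) \<le> fst q \<and> fst q \<le> max (c i) (fst pp))"
    using side pm by (auto simp: min_def max_def)
  have iso2: "\<forall>q\<in>P. q \<noteq> pp \<longrightarrow> \<not> (min (c (Suc i)) (fst pp) \<le> fst q \<and> fst q \<le> max (c (Suc i)) (fst pp))"
    using side pm by (auto simp: min_def max_def)
  show ?thesis
    unfolding pp_def[symmetric]
  proof (intro conjI allI impI)
    fix T vs assume h: "triangulation P T \<and> is_tpath P T (vline (c i)) vs"
    then show "tdeg pp vs \<in> {0, 1, 2}" using deg_le2[OF _ xi _ pP iso1] by blast
  next
    fix T vs assume h: "triangulation P T \<and> is_tpath P T (vline (c (Suc i))) vs"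
    then show "tdeg pp vs \<in> {0, 1, 2}" using deg_le2[OF _ xi _ pP iso2] by blast
  next
    fix T T' vs ws
    assume h: "triangulation P T \<and> triangulation P T' \<and> is_tpath P T (vline (c i)) vs \<and>
      is_tpath P T' (vline (c (Suc i))) ws \<and> \<not> tpaths_cross vs ws"
    show "tdeg pp vs \<noteq> 0 \<or> tdeg pp ws \<noteq> 0"
      using part3[OF _ _ xi fin pP side pm] h by blast
  qed
qed


end
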